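(* In Mahi-Mahi with wave length $w=4$: for every round $r$, there exists a block $b$ of round $r$ that has at least $2f+1$ certificates in round $r+3$.
   Context: There are $n=3f+1$ validators, at most $f$ Byzantine; every honest validator creates exactly one block in every round. Every valid block of round $r$ has as parents at least $2f+1$ blocks of round $r-1$ from distinct validators. A block $b$ of round $r'$ is a vote for a block $L$ of round $r<r'$ with author $a$ if the first block with author $a$ and round $r$ encountered in the deterministic depth-first search from $b$ along parent references is $L$. With wave length $4$, a block $c$ of round $r+3$ is a certificate for a block $L$ of round $r$ if at least $2f+1$ of $c$'s parents (blocks of round $r+2$) are votes for $L$. *)

theory Defs
  imports Main
begin

text \<open>Since every parent of a block of round k has round k-1,
a search depth of (round b) explores the whole causal history of b.\<close>

fun dfs :: "('b \<Rightarrow> 'b list) \<Rightarrow> nat \<Rightarrow> 'b \<Rightarrow> 'b list" where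
  "dfs parents 0 b = [b]"
| "dfs parents (Suc k) b = b # concat (map (dfs parents k) (parents b))"

definition is_vote ::
  "('b \<Rightarrow> 'v) \<Rightarrow> ('b \<Rightarrow> nat) \<Rightarrow> ('b \<Rightarrow> 'b list) \<Rightarrow> 'b \<Rightarrow> 'b \<Rightarrow> bool" where
  "is_vote author round parents b L \<longleftrightarrow>
     round L < round b \<and>
     find (\<lambda>x. author x = author L \<and> round x = round L) (dfs parents (round b) b) = Some L"

text \<open>Wave length 4: c (of round r+3) is a certificate for L (of round r) if at least
2f+1 of c's parents (blocks of round r+2) are votes for L.\<close>
definition is_certificate ::
  "nat \<Rightarrow> ('b \<Rightarrow> 'v) \<Rightarrow> ('b \<Rightarrow> nat) \<Rightarrow> ('b \<Rightarrow> 'b list) \<Rightarrow> 'b \<Rightarrow> 'b \<Rightarrow> bool" where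
  "is_certificate f author round parents L c \<longleftrightarrow>
     round c = round L + 3 \<and>
     2 * f + 1 \<le> card {p \<in> set (parents c). round p = round L + 2 \<and> is_vote author round parents p L}"

definition valid_dag ::
  "nat \<Rightarrow> 'v set \<Rightarrow> 'v set \<Rightarrow> 'b set \<Rightarrow> ('b \<Rightarrow> 'v) \<Rightarrow> ('b \<Rightarrow> nat) \<Rightarrow> ('b \<Rightarrow> 'b list) \<Rightarrow> bool" where
  "valid_dag f V Byz B author round parents \<longleftrightarrow>
     finite V \<and> card V = 3 * f + 1 \<and> Byz \<subseteq> V \<and> card Byz \<le> f \<and>
     (\<forall>v \<in> V - Byz. \<forall>r. \<exists>!b. b \<in> B \<and> author b = v \<and> round b = r) \<and>
     (\<forall>b \<in> B. author b \<in> V) \<and>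
     (\<forall>b \<in> B. set (parents b) \<subseteq> B) \<and>
     (\<forall>b \<in> B. \<forall>p \<in> set (parents b). round p + 1 = round b) \<and>
     (\<forall>b \<in> B. 0 < round b \<longrightarrow> 2 * f + 1 \<le> card (author ` set (parents b)))"

end

theory Submission
  imports Defs
begin

lemma find_unique_aux:
  "b \<in> set xs \<Longrightarrow> P b \<Longrightarrow> (\<forall>x\<in>set xs. P x \<longrightarrow> x = b) \<Longrightarrow> find P xs = Some b"
proof (induction xs)
  case Nil
  thus ?case by simp
next
  case (Cons a xs)
  show ?case
  proof (cases "P a")
    case True
    hence "a = b" using Cons.prems(3) by simp
    thus ?thesis using True by simp
  next
    case False
    hence "a \<noteq> b" using Cons.prems(2) by blast
    hence "b \<in> set xs" using Cons.prems(1) by simp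
    moreover have "\<forall>x\<in>set xs. P x \<longrightarrow> x = b" using Cons.prems(3) by simp
    ultimately have "find P xs = Some b" using Cons.IH Cons.prems(2) by blast
    thus ?thesis using False by simp
  qed
qed

lemma dfs_sub:
  "p \<in> B \<Longrightarrow> \<forall>b\<in>B. set (parents b) \<subseteq> B \<Longrightarrow> set (dfs parents k p) \<subseteq> B"
  by (induction k arbitrary: p) auto

lemma dfs_head: "p \<in> set (dfs parents k p)"
  by (cases k) auto

lemma dfs_2:
  "x \<in> set (parents p) \<Longrightarrow> b \<in> set (parents x) \<Longrightarrow> b \<in> set (dfs parents (Suc (Suc k)) p)"
  using dfs_head[of b parents k] by auto

lemma card_filter_sum:
  "finite A \<Longrightarrow> card {x \<in> A. P x} = (\<Sum>x\<in>A. if P x then 1 else 0)"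
  using sum.inter_filter[of A "\<lambda>_. 1::nat" P] by simp

theorem lemma15:
  fixes f :: nat and V Byz :: "'v set" and B :: "'b set"
    and author :: "'b \<Rightarrow> 'v" and round :: "'b \<Rightarrow> nat" and parents :: "'b \<Rightarrow> 'b list"
  assumes "valid_dag f V Byz B author round parents"
  shows "\<forall>r. \<exists>b \<in> B. round b = r \<and>
           (\<exists>C. C \<subseteq> {c \<in> B. is_certificate f author round parents b c} \<and>
                finite C \<and> 2 * f + 1 \<le> card C)"
proof
  fix r
  note vd = assms[unfolded valid_dag_def]
  have finV: "finite V" using vd by (elim conjE) assumption
  have cV: "card V = 3 * f + 1" using vd by (elim conjE) assumption
  have BV: "Byz \<subseteq> V" using vd by (elim conjE) assumption
  have cB: "card Byz \<le> f" using vd by (elim conjE) assumption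
  have hon: "\<forall>v \<in> V - Byz. \<forall>r. \<exists>!b. b \<in> B \<and> author b = v \<and> round b = r"
    using vd by (elim conjE) assumption
  have auth: "\<forall>b \<in> B. author b \<in> V" using vd by (elim conjE) assumption
  have par: "\<forall>b \<in> B. set (parents b) \<subseteq> B" using vd by (elim conjE) assumption
  have rnd: "\<forall>b \<in> B. \<forall>p \<in> set (parents b). round p + 1 = round b"
    using vd by (elim conjE) assumption
  have val: "\<forall>b \<in> B. 0 < round b \<longrightarrow> 2 * f + 1 \<le> card (author ` set (parents b))"
    using vd by (elim conjE) assumption
  define Hv where "Hv = V - Byz"
  have finH: "finite Hv" using finV Hv_def by simp
  have finByz: "finite Byz" using finV BV finite_subset by blast
  have cH: "card Hv = 3 * f + 1 - card Byz"
    using Hv_def card_Diff_subset[OF finByz BV] cV by simp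
  have cH2: "card Hv + card Byz = 3 * f + 1" using cH cB by simp
  define blk where "blk k v = (THE b. b \<in> B \<and> author b = v \<and> round b = k)" for k v
  have ex1: "\<exists>!b. b \<in> B \<and> author b = v \<and> round b = k" if "v \<in> Hv" for k v
  proof -
    have "v \<in> V - Byz" using that Hv_def by simp
    thus ?thesis by (rule hon[rule_format])
  qed
  have blk: "blk k v \<in> B \<and> author (blk k v) = v \<and> round (blk k v) = k" if "v \<in> Hv" for k v
    unfolding blk_def by (rule theI'[OF ex1[OF that]])
  have blk_uniq: "y = blk k v" if "v \<in> Hv" "y \<in> B" "author y = v" "round y = k" for y k v
  proof -
    have "(THE b. b \<in> B \<and> author b = v \<and> round b = k) = y"
      by (rule the1_equality[OF ex1[OF that(1)]]) (simp add: that)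
    thus ?thesis unfolding blk_def by simp
  qed
  define R where "R u = {v \<in> Hv. blk r v \<in> set (parents (blk (Suc r) u))}" for u
  have Rcard: "f + 1 \<le> card (R u)" if u: "u \<in> Hv" for u
  proof -
    define x where "x = blk (Suc r) u"
    have xB: "x \<in> B" and xr: "round x = Suc r" using blk[OF u] x_def by auto
    have c1: "2 * f + 1 \<le> card (author ` set (parents x))" using val xB xr by auto
    define A where "A = author ` set (parents x) \<inter> Hv"
    have "author ` set (parents x) \<subseteq> A \<union> Byz"
    proof
      fix a assume "a \<in> author ` set (parents x)"
      then obtain y where y: "y \<in> set (parents x)" "a = author y" by blast
      have "y \<in> B" using y(1) par xB by blast
      hence "a \<in> V" using auth y(2) by simp
      thus "a \<in> A \<union> Byz" using A_def Hv_def y by auto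
    qed
    hence "card (author ` set (parents x)) \<le> card (A \<union> Byz)"
      using finH finByz A_def by (intro card_mono) auto
    also have "\<dots> \<le> card A + card Byz" by (rule card_Un_le)
    finally have "card (author ` set (parents x)) \<le> card A + card Byz" .
    hence cA: "f + 1 \<le> card A" using c1 cB by linarith
    have "A \<subseteq> R u"
    proof
      fix v assume "v \<in> A"
      then obtain y where y: "y \<in> set (parents x)" "author y = v" "v \<in> Hv" using A_def by blast
      have yB: "y \<in> B" using y(1) par xB by blast
      have "round y + 1 = round x" using rnd xB y(1) by blast
      hence yr: "round y = r" using xr by simp
      have "y = blk r v" using blk_uniq[OF y(3) yB y(2) yr] .
      thus "v \<in> R u" using R_def y x_def by simp
    qed
    moreover have "finite (R u)" using R_def finH by simp
    ultimately have "card A \<le> card (R u)" by (rule card_mono[rotated])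
    thus ?thesis using cA by linarith
  qed
  have "\<exists>v\<in>Hv. f + 1 \<le> card {u \<in> Hv. v \<in> R u}"
  proof (rule ccontr)
    assume "\<not> ?thesis"
    hence le: "\<forall>v\<in>Hv. card {u \<in> Hv. v \<in> R u} \<le> f" by auto
    have "(\<Sum>u\<in>Hv. card (R u)) = (\<Sum>u\<in>Hv. \<Sum>v\<in>Hv. if v \<in> R u then 1 else 0)"
      using card_filter_sum[OF finH] R_def by (intro sum.cong) (auto simp: card_filter_sum)
    also have "\<dots> = (\<Sum>v\<in>Hv. \<Sum>u\<in>Hv. if v \<in> R u then 1 else 0)" by (rule sum.swap)
    also have "\<dots> = (\<Sum>v\<in>Hv. card {u \<in> Hv. v \<in> R u})"
      using card_filter_sum[OF finH] by simp
    also have "\<dots> \<le> (\<Sum>v\<in>Hv. f)" using le by (intro sum_mono) auto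
    finally have s1: "(\<Sum>u\<in>Hv. card (R u)) \<le> card Hv * f" by simp
    have "(\<Sum>u\<in>Hv. f + 1) \<le> (\<Sum>u\<in>Hv. card (R u))" using Rcard by (intro sum_mono) auto
    hence "card Hv * (f + 1) \<le> card Hv * f" using s1 by simp
    moreover have "card Hv > 0" using cH cB by simp
    ultimately show False by simp
  qed
  then obtain v where vH: "v \<in> Hv" and cQ: "f + 1 \<le> card {u \<in> Hv. v \<in> R u}" by blast
  define Q where "Q = {u \<in> Hv. v \<in> R u}"
  define b where "b = blk r v"
  have bB: "b \<in> B" and ba: "author b = v" and br: "round b = r" using blk[OF vH] b_def by auto
  have reach: "\<exists>u\<in>Q. blk (Suc r) u \<in> set (parents p)" if p: "p \<in> B" "round p = Suc (Suc r)" for p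
  proof (rule ccontr)
    assume na: "\<not> ?thesis"
    have "author ` set (parents p) \<subseteq> Byz \<union> (Hv - Q)"
    proof
      fix a assume "a \<in> author ` set (parents p)"
      then obtain y where y: "y \<in> set (parents p)" "author y = a" by blast
      have yB: "y \<in> B" using y par p by blast
      have "round y + 1 = round p" using rnd p(1) y(1) by blast
      hence yr: "round y = Suc r" using p(2) by simp
      show "a \<in> Byz \<union> (Hv - Q)"
      proof (cases "a \<in> Hv")
        case True
        have "y = blk (Suc r) a" using blk_uniq[OF True yB y(2) yr] .
        hence "a \<notin> Q" using na y by auto
        thus ?thesis using True by blast
      next
        case False
        have "a \<in> V" using auth yB y(2) by auto
        thus ?thesis using False Hv_def by simp
      qed
    qed
    hence "card (author ` set (parents p)) \<le> card (Byz \<union> (Hv - Q))"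
      using finH finByz by (intro card_mono) auto
    also have "\<dots> \<le> card Byz + card (Hv - Q)" by (rule card_Un_le)
    also have "card (Hv - Q) = card Hv - card Q"
      using finH Q_def by (intro card_Diff_subset) auto
    finally have "card (author ` set (parents p)) \<le> card Byz + (card Hv - card Q)" .
    moreover have "2 * f + 1 \<le> card (author ` set (parents p))" using val p by auto
    moreover have "card Q \<le> card Hv" using finH Q_def by (intro card_mono) auto
    moreover have "f + 1 \<le> card Q" using cQ Q_def by simp
    ultimately show False using cH2 by linarith
  qed
  have vote: "is_vote author round parents p b" if p: "p \<in> B" "round p = Suc (Suc r)" for p
  proof -
    obtain u where u: "u \<in> Q" "blk (Suc r) u \<in> set (parents p)" using reach[OF p] by blast
    have "b \<in> set (parents (blk (Suc r) u))" using u Q_def R_def b_def by auto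
    hence bin: "b \<in> set (dfs parents (round p) p)" using dfs_2 u p by simp
    have uq: "\<forall>x\<in>set (dfs parents (round p) p). author x = author b \<and> round x = round b \<longrightarrow> x = b"
    proof (intro ballI impI)
      fix x assume xin: "x \<in> set (dfs parents (round p) p)" and xa: "author x = author b \<and> round x = round b"
      have "x \<in> B" using dfs_sub[OF p(1) par] xin by blast
      thus "x = b" using blk_uniq[OF vH, of x r] xa ba br b_def by simp
    qed
    have "find (\<lambda>x. author x = author b \<and> round x = round b) (dfs parents (round p) p) = Some b"
      by (rule find_unique_aux[OF bin _ uq]) simp
    moreover have "round b < round p" using br p by simp
    ultimately show ?thesis unfolding is_vote_def by blast
  qed
  have cert: "is_certificate f author round parents b c" if c: "c \<in> B" "round c = r + 3" for c
  proof -
    have "{p \<in> set (parents c). round p = round b + 2 \<and> is_vote author round parents p b}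
          = set (parents c)"
    proof -
      have "\<forall>p\<in>set (parents c). p \<in> B \<and> round p = Suc (Suc r)"
      proof
        fix p assume pc: "p \<in> set (parents c)"
        have "round p + 1 = round c" using rnd c(1) pc by blast
        thus "p \<in> B \<and> round p = Suc (Suc r)" using par c pc by auto
      qed
      thus ?thesis using vote br by auto
    qed
    moreover have "2 * f + 1 \<le> card (author ` set (parents c))" using val c by auto
    moreover have "card (author ` set (parents c)) \<le> card (set (parents c))" by (rule card_image_le) simp
    ultimately show ?thesis unfolding is_certificate_def using c br by simp
  qed
  have "card Hv > 0" using cH2 cB by linarith
  hence "Hv \<noteq> {}" by (metis card.empty less_irrefl)
  then obtain w where wH: "w \<in> Hv" by blast
  define c0 where "c0 = blk (r + 4) w"
  have c0B: "c0 \<in> B" and c0r: "round c0 = r + 4" using blk[OF wH] c0_def by auto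
  define C where "C = set (parents c0)"
  have Csub: "C \<subseteq> {c \<in> B. is_certificate f author round parents b c}"
  proof
    fix c assume "c \<in> C"
    hence cc: "c \<in> set (parents c0)" using C_def by simp
    have "round c + 1 = round c0" using rnd c0B cc by blast
    hence "round c = r + 3" using c0r by simp
    moreover have "c \<in> B" using par c0B cc by blast
    ultimately show "c \<in> {c \<in> B. is_certificate f author round parents b c}" using cert by simp
  qed
  have Ccard: "2 * f + 1 \<le> card C"
  proof -
    have "2 * f + 1 \<le> card (author ` C)" using val c0B c0r C_def by auto
    also have "\<dots> \<le> card C" using C_def by (intro card_image_le) simp
    finally show ?thesis .
  qed
  have Cfin: "finite C" using C_def by simp
  have "round b = r \<and>
           (\<exists>C. C \<subseteq> {c \<in> B. is_certificate f author round parents b c} \<and>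
                finite C \<and> 2 * f + 1 \<le> card C)"
    using br Csub Cfin Ccard by (intro conjI exI[of _ C]) simp_all
  thus "\<exists>b \<in> B. round b = r \<and>
           (\<exists>C. C \<subseteq> {c \<in> B. is_certificate f author round parents b c} \<and>
                finite C \<and> 2 * f + 1 \<le> card C)"
    using bB by (rule bexI)
qed

end
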